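(* Let $T=\{a,b,c,d,e\}$ be the semigroup with multiplication $ay=a$, $dy=d$, $ey=e$ for all $y\in T$, and $ba=bb=bd=a$, $bc=b$, $be=d$, $ca=cb=cd=a$, $cc=c$, $ce=e$. (This $T$ is the dual $(\ell_3^{\mathsf{bar}})^{\mathsf{op}}$.) Then (i) the identities satisfied by $T$ are axiomatized by $xy^2\approx xy$ and $xyz\approx xyzy$; (ii) the subpseudovariety of $\llbracket T\rrbracket$ defined by the identity $xyzx\approx xyxz$ is the unique maximal subpseudovariety of $\llbracket T\rrbracket$.
   Context: Identities are between words over a countably infinite alphabet of variables. A pseudovariety is a class of finite semigroups closed under finite direct products, subsemigroups and homomorphic images; $\llbracket S\rrbracket$ is the pseudovariety generated by $S$; a maximal subpseudovariety is a maximal proper subpseudovariety. *)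

theory Defs
  imports Main
begin

text \<open>Words over the countably infinite alphabet of variables nat are nonempty
lists of naturals. An identity is a pair of words.\<close>

fun eval_word :: "('a \<Rightarrow> 'a \<Rightarrow> 'a) \<Rightarrow> (nat \<Rightarrow> 'a) \<Rightarrow> nat list \<Rightarrow> 'a" where
  "eval_word m h [x] = h x"
| "eval_word m h (x # y # w) = m (h x) (eval_word m h (y # w))"
| "eval_word m h [] = undefined"

type_synonym 'a sgrp = "'a set \<times> ('a \<Rightarrow> 'a \<Rightarrow> 'a)"

definition is_semigroup :: "'a sgrp \<Rightarrow> bool" where
  "is_semigroup S \<longleftrightarrow> fst S \<noteq> {}
     \<and> (\<forall>x\<in>fst S. \<forall>y\<in>fst S. snd S x y \<in> fst S)
     \<and> (\<forall>x\<in>fst S. \<forall>y\<in>fst S. \<forall>z\<in>fst S. snd S (snd S x y) z = snd S x (snd S y z))"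

definition finite_semigroup :: "'a sgrp \<Rightarrow> bool" where
  "finite_semigroup S \<longleftrightarrow> is_semigroup S \<and> finite (fst S)"

definition satisfies :: "'a sgrp \<Rightarrow> nat list \<Rightarrow> nat list \<Rightarrow> bool" where
  "satisfies S u v \<longleftrightarrow> (\<forall>h. (\<forall>x. h x \<in> fst S) \<longrightarrow> eval_word (snd S) h u = eval_word (snd S) h v)"

definition subst_word :: "(nat \<Rightarrow> nat list) \<Rightarrow> nat list \<Rightarrow> nat list" where
  "subst_word \<sigma> w = concat (map \<sigma> w)"

inductive derivable :: "(nat list \<times> nat list) set \<Rightarrow> nat list \<Rightarrow> nat list \<Rightarrow> bool"
  for E where
  ax: "(u, v) \<in> E \<Longrightarrow> derivable E u v"
| refl: "u \<noteq> [] \<Longrightarrow> derivable E u u"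
| sym: "derivable E u v \<Longrightarrow> derivable E v u"
| trans: "derivable E u v \<Longrightarrow> derivable E v w \<Longrightarrow> derivable E u w"
| mult_left: "derivable E u v \<Longrightarrow> w \<noteq> [] \<Longrightarrow> derivable E (w @ u) (w @ v)"
| mult_right: "derivable E u v \<Longrightarrow> w \<noteq> [] \<Longrightarrow> derivable E (u @ w) (v @ w)"
| subst: "derivable E u v \<Longrightarrow> (\<forall>x. \<sigma> x \<noteq> []) \<Longrightarrow>
           derivable E (subst_word \<sigma> u) (subst_word \<sigma> v)"

definition is_hom :: "'a sgrp \<Rightarrow> 'b sgrp \<Rightarrow> ('a \<Rightarrow> 'b) \<Rightarrow> bool" where
  "is_hom S S' \<phi> \<longleftrightarrow> (\<forall>x\<in>fst S. \<phi> x \<in> fst S')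
     \<and> (\<forall>x\<in>fst S. \<forall>y\<in>fst S. \<phi> (snd S x y) = snd S' (\<phi> x) (\<phi> y))"

definition is_iso :: "'a sgrp \<Rightarrow> 'b sgrp \<Rightarrow> ('a \<Rightarrow> 'b) \<Rightarrow> bool" where
  "is_iso S S' \<phi> \<longleftrightarrow> is_hom S S' \<phi> \<and> bij_betw \<phi> (fst S) (fst S')"

definition prod_sgrp :: "'a sgrp \<Rightarrow> 'b sgrp \<Rightarrow> ('a \<times> 'b) sgrp" where
  "prod_sgrp S1 S2 = (fst S1 \<times> fst S2,
     \<lambda>(a, b) (c, d). (snd S1 a c, snd S2 b d))"

text \<open>Finite semigroups are represented (up to isomorphism) by finite semigroups
whose carrier is a set of natural numbers. A pseudovariety is a class of such
semigroups closed under finite direct products (including the empty product,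
the trivial semigroup), subsemigroups and homomorphic images (in particular
under isomorphism).\<close>
definition pseudovariety :: "nat sgrp set \<Rightarrow> bool" where
  "pseudovariety V \<longleftrightarrow>
     (\<forall>S\<in>V. finite_semigroup S)
   \<and> (\<forall>S. finite_semigroup S \<and> card (fst S) = 1 \<longrightarrow> S \<in> V)
   \<and> (\<forall>S1\<in>V. \<forall>S2\<in>V. \<forall>P \<phi>. finite_semigroup P \<and> is_iso P (prod_sgrp S1 S2) \<phi> \<longrightarrow> P \<in> V)
   \<and> (\<forall>S\<in>V. \<forall>B. B \<noteq> {} \<and> B \<subseteq> fst S \<and> (\<forall>x\<in>B. \<forall>y\<in>B. snd S x y \<in> B)
          \<longrightarrow> (B, snd S) \<in> V)
   \<and> (\<forall>S\<in>V. \<forall>S' \<phi>. finite_semigroup S' \<and> is_hom S S' \<phi> \<and> \<phi> ` fst S = fst S'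
          \<longrightarrow> S' \<in> V)"

definition generated_pv :: "nat sgrp \<Rightarrow> nat sgrp set" where
  "generated_pv S = \<Inter> {V. pseudovariety V \<and> S \<in> V}"

definition maximal_subpv :: "nat sgrp set \<Rightarrow> nat sgrp set \<Rightarrow> bool" where
  "maximal_subpv W U \<longleftrightarrow> pseudovariety W \<and> W \<subset> U
     \<and> (\<forall>V. pseudovariety V \<and> W \<subseteq> V \<and> V \<subset> U \<longrightarrow> V = W)"

text \<open>Elements a, b, c, d, e are encoded as 0, 1, 2, 3, 4.\<close>
definition T_mult :: "nat \<Rightarrow> nat \<Rightarrow> nat" where
  "T_mult x y =
    (if x = 1 then (if y = 2 then 1 else if y = 4 then 3 else 0)
     else if x = 2 then (if y = 2 then 2 else if y = 4 then 4 else 0)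
     else x)"

definition T_sgrp :: "nat sgrp" where
  "T_sgrp = ({0, 1, 2, 3, 4}, T_mult)"

end

theory Submission
  imports Defs "HOL-Library.Nat_Bijection"
begin


lemma eval_Cons: "w \<noteq> [] \<Longrightarrow> eval_word m h (x # w) = m (h x) (eval_word m h w)"
  by (cases w) auto

lemma eval_in:
  assumes "is_semigroup S" "\<forall>x. h x \<in> fst S" "u \<noteq> []"
  shows "eval_word (snd S) h u \<in> fst S"
  using assms(3)
proof (induction u)
  case (Cons x w) then show ?case using assms(1,2) unfolding is_semigroup_def
    by (cases "w = []") (auto simp: eval_Cons)
qed simp

lemma eval_append:
  assumes "is_semigroup S" "\<forall>x. h x \<in> fst S" "u \<noteq> []" "v \<noteq> []"
  shows "eval_word (snd S) h (u @ v) = snd S (eval_word (snd S) h u) (eval_word (snd S) h v)"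
  using assms(3)
proof (induction u)
  case (Cons x w)
  show ?case
  proof (cases "w = []")
    case True then show ?thesis using assms(4) by (simp add: eval_Cons)
  next
    case False
    have "eval_word (snd S) h ((x # w) @ v) = snd S (h x) (eval_word (snd S) h (w @ v))"
      using assms(4) by (simp add: eval_Cons)
    also have "\<dots> = snd S (h x) (snd S (eval_word (snd S) h w) (eval_word (snd S) h v))"
      using Cons False by simp
    also have "\<dots> = snd S (snd S (h x) (eval_word (snd S) h w)) (eval_word (snd S) h v)"
      using assms eval_in[OF assms(1,2)] False unfolding is_semigroup_def by simp
    finally show ?thesis using False by (simp add: eval_Cons)
  qed
qed simp

lemma subst_word_Cons: "subst_word \<sigma> (x # w) = \<sigma> x @ subst_word \<sigma> w"
  by (simp add: subst_word_def)

lemma subst_ne: "(\<forall>x. \<sigma> x \<noteq> []) \<Longrightarrow> u \<noteq> [] \<Longrightarrow> subst_word \<sigma> u \<noteq> []"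
  by (cases u) (auto simp: subst_word_def)

lemma eval_subst:
  assumes "is_semigroup S" "\<forall>x. h x \<in> fst S" "\<forall>x. \<sigma> x \<noteq> []" "u \<noteq> []"
  shows "eval_word (snd S) h (subst_word \<sigma> u) = eval_word (snd S) (\<lambda>x. eval_word (snd S) h (\<sigma> x)) u"
  using assms(4)
proof (induction u)
  case (Cons x w)
  show ?case
  proof (cases "w = []")
    case True then show ?thesis by (simp add: subst_word_def)
  next
    case False
    have "subst_word \<sigma> (x # w) = \<sigma> x @ subst_word \<sigma> w" by (simp add: subst_word_Cons)
    then show ?thesis using Cons False eval_append[OF assms(1,2)] assms(3) subst_ne[OF assms(3)]
      by (simp add: eval_Cons)
  qed
qed simp

lemma derivable_ne:
  assumes "\<forall>(u,v)\<in>E. u \<noteq> [] \<and> v \<noteq> []" "derivable E u v"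
  shows "u \<noteq> [] \<and> v \<noteq> []"
  using assms(2)
proof (induction rule: derivable.induct)
  case (subst u v \<sigma>) then show ?case using subst_ne by blast
qed (use assms(1) in auto)

lemma soundness:
  assumes S: "is_semigroup S" and E: "\<forall>(u,v)\<in>E. u \<noteq> [] \<and> v \<noteq> []"
    and sat: "\<forall>(u,v)\<in>E. satisfies S u v" and d: "derivable E u v"
  shows "satisfies S u v"
  using d
proof (induction rule: derivable.induct)
  case (ax u v) then show ?case using sat by auto
next
  case (refl u) then show ?case by (simp add: satisfies_def)
next
  case (sym u v) then show ?case by (simp add: satisfies_def)
next
  case (trans u v w) then show ?case by (simp add: satisfies_def)
next
  case (mult_left u v w)
  have ne: "u \<noteq> [] \<and> v \<noteq> []" using derivable_ne[OF E mult_left(1)] .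
  show ?case using mult_left ne eval_append[OF S] unfolding satisfies_def by simp
next
  case (mult_right u v w)
  have ne: "u \<noteq> [] \<and> v \<noteq> []" using derivable_ne[OF E mult_right(1)] .
  show ?case using mult_right ne eval_append[OF S] unfolding satisfies_def by simp
next
  case (subst u v \<sigma>)
  have ne: "u \<noteq> [] \<and> v \<noteq> []" using derivable_ne[OF E subst(1)] .
  show ?case unfolding satisfies_def
  proof (intro allI impI)
    fix h :: "nat \<Rightarrow> _" assume h: "\<forall>x. h x \<in> fst S"
    have h2: "\<forall>x. eval_word (snd S) h (\<sigma> x) \<in> fst S" using eval_in[OF S h] subst(2) by auto
    show "eval_word (snd S) h (subst_word \<sigma> u) = eval_word (snd S) h (subst_word \<sigma> v)"
      using eval_subst[OF S h subst(2)] ne subst(3) h2 unfolding satisfies_def by simp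
  qed
qed



abbreviation E0 :: "(nat list \<times> nat list) set" where
  "E0 \<equiv> {([0, 1, 1], [0, 1]), ([0, 1, 2], [0, 1, 2, 1])}"

lemma T_assoc: "T_mult (T_mult x y) z = T_mult x (T_mult y z)"
  by (auto simp: T_mult_def)

lemma T_closed: "x \<in> {0,1,2,3,4} \<Longrightarrow> y \<in> {0,1,2,3,4} \<Longrightarrow> T_mult x y \<in> {0,1,2,3,4}"
  by (auto simp: T_mult_def)

lemma T_semigroup: "finite_semigroup T_sgrp"
  unfolding finite_semigroup_def is_semigroup_def T_sgrp_def using T_closed T_assoc
  by (simp del: insert_iff)

lemma T_ax1: "T_mult x (T_mult y y) = T_mult x y"
  by (auto simp: T_mult_def)

lemma T_ax2: "T_mult x (T_mult y (T_mult z y)) = T_mult x (T_mult y z)"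
  by (auto simp: T_mult_def)

lemma T_formula:
  "eval_word T_mult h (x # t) =
     (case find (\<lambda>y. h y \<noteq> 2) t of None \<Rightarrow> h x | Some z \<Rightarrow> T_mult (h x) (h z))"
proof (induction t arbitrary: x)
  case Nil then show ?case by simp
next
  case (Cons y w)
  show ?case
    using Cons[of y] by (auto simp: T_mult_def split: option.splits)
qed

lemma T_sat_ax: "\<forall>(u,v)\<in>E0. satisfies T_sgrp u v"
  unfolding satisfies_def T_sgrp_def by (simp add: T_ax1 T_ax2)

lemma E0_ne: "\<forall>(u,v)\<in>E0. u \<noteq> [] \<and> v \<noteq> []" by auto

fun rdC :: "nat set \<Rightarrow> nat list \<Rightarrow> nat list" where
  "rdC C [] = []"
| "rdC C (y # w) = (if y \<in> C then rdC C w else y # rdC (insert y C) w)"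

lemma rdC_find:
  "rdC C t = (case find (\<lambda>y. y \<notin> C) t of None \<Rightarrow> [] | Some z \<Rightarrow> z # rdC (insert z C) t)"
proof (induction t arbitrary: C)
  case (Cons y w)
  have "rdC (insert y C) (y # w) = rdC (insert y C) w" by simp
  then show ?case using Cons by (auto split: option.splits)
qed simp

lemma rdC_append: "rdC C (t @ [y]) = rdC C t @ (if y \<in> C \<union> set t then [] else [y])"
  by (induction t arbitrary: C) auto

lemma set_rdC: "set (rdC C t) = set t - C"
  by (induction t arbitrary: C) auto

lemma find_eq_rdC:
  assumes "\<forall>D. find (\<lambda>y. y \<notin> D) t1 = find (\<lambda>y. y \<notin> D) t2"
  shows "rdC C t1 = rdC C t2"
proof (induction "card (set t1 - C)" arbitrary: C rule: less_induct)
  case less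
  show ?case
  proof (cases "find (\<lambda>y. y \<notin> C) t1")
    case None
    then show ?thesis using assms rdC_find[of C t1] rdC_find[of C t2] by simp
  next
    case (Some z)
    then have z: "z \<in> set t1" "z \<notin> C" by (auto simp: find_Some_iff)
    have "card (set t1 - insert z C) < card (set t1 - C)"
      using z by (intro psubset_card_mono) auto
    then have "rdC (insert z C) t1 = rdC (insert z C) t2" using less by blast
    then show ?thesis using Some assms rdC_find[of C t1] rdC_find[of C t2] by simp
  qed
qed

lemma dup_deriv:
  assumes "([0, 1, 1], [0, 1]) \<in> E" "([0, 1, 2], [0, 1, 2, 1]) \<in> E" "p \<noteq> []"
  shows "derivable E (p @ y # q @ [y]) (p @ y # q)"
proof (cases "q = []")
  case True
  define \<sigma> where "\<sigma> = (\<lambda>n::nat. if n = 0 then p else [y])"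
  have s: "\<forall>x. \<sigma> x \<noteq> []" using assms(3) by (simp add: \<sigma>_def)
  have "derivable E (subst_word \<sigma> [0,1,1]) (subst_word \<sigma> [0,1])"
    by (rule derivable.subst[OF derivable.ax[OF assms(1)] s])
  moreover have "subst_word \<sigma> [0,1,1] = p @ [y, y]" "subst_word \<sigma> [0,1] = p @ [y]"
    by (simp_all add: \<sigma>_def subst_word_def)
  ultimately show ?thesis using True by simp
next
  case False
  define \<sigma> where "\<sigma> = (\<lambda>n::nat. if n = 0 then p else if n = 2 then q else [y])"
  have s: "\<forall>x. \<sigma> x \<noteq> []" using assms(3) False by (simp add: \<sigma>_def)
  have "derivable E (subst_word \<sigma> [0,1,2]) (subst_word \<sigma> [0,1,2,1])"
    by (rule derivable.subst[OF derivable.ax[OF assms(2)] s])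
  moreover have "subst_word \<sigma> [0,1,2] = p @ y # q" "subst_word \<sigma> [0,1,2,1] = p @ y # q @ [y]"
    by (simp_all add: \<sigma>_def subst_word_def)
  ultimately show ?thesis by (simp add: derivable.sym)
qed

lemma nf_deriv:
  assumes "([0, 1, 1], [0, 1]) \<in> E" "([0, 1, 2], [0, 1, 2, 1]) \<in> E"
  shows "derivable E (x # t) (x # rdC {} t)"
proof (induction t rule: rev_induct)
  case Nil then show ?case by (simp add: derivable.refl)
next
  case (snoc y t)
  have 1: "derivable E ((x # t) @ [y]) ((x # rdC {} t) @ [y])"
    using snoc by (rule derivable.mult_right) simp
  show ?case
  proof (cases "y \<in> set t")
    case False then show ?thesis using 1 by (simp add: rdC_append)
  next
    case True
    then have "y \<in> set (rdC {} t)" by (simp add: set_rdC)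
    then obtain r1 r2 where r: "rdC {} t = r1 @ y # r2" by (meson split_list)
    have "derivable E ((x # r1) @ y # r2 @ [y]) ((x # r1) @ y # r2)"
      by (rule dup_deriv[OF assms]) simp
    then have "derivable E ((x # rdC {} t) @ [y]) (x # rdC {} t)" using r by simp
    then have "derivable E ((x # t) @ [y]) (x # rdC {} t)" by (rule derivable.trans[OF 1])
    then show ?thesis using True by (simp add: rdC_append)
  qed
qed

lemma T_char:
  assumes "satisfies T_sgrp (x1 # t1) (x2 # t2)"
  shows "x1 = x2 \<and> (\<forall>C. find (\<lambda>y. y \<notin> C) t1 = find (\<lambda>y. y \<notin> C) t2)"
proof -
  have ev: "\<And>h. (\<forall>x. h x \<in> {0,1,2,3,4}) \<Longrightarrow> eval_word T_mult h (x1 # t1) = eval_word T_mult h (x2 # t2)"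
    using assms unfolding satisfies_def T_sgrp_def by simp
  have x12: "x1 = x2"
  proof (rule ccontr)
    assume ne: "x1 \<noteq> x2"
    let ?h = "\<lambda>z. if z = x1 then 0 else 3::nat"
    have "eval_word T_mult ?h (x1 # t1) = eval_word T_mult ?h (x2 # t2)" by (rule ev) auto
    then show False using ne by (simp add: T_formula T_mult_def split: option.splits)
  qed
  have "\<forall>C. find (\<lambda>y. y \<notin> C) t1 = find (\<lambda>y. y \<notin> C) t2"
  proof (rule allI, rule ccontr)
    fix C
    define r1 where "r1 = find (\<lambda>y. y \<notin> C) t1"
    define r2 where "r2 = find (\<lambda>y. y \<notin> C) t2"
    assume "find (\<lambda>y. y \<notin> C) t1 \<noteq> find (\<lambda>y. y \<notin> C) t2"
    then have ne: "r1 \<noteq> r2" by (simp add: r1_def r2_def)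
    have r1C: "\<And>z. r1 = Some z \<Longrightarrow> z \<notin> C" by (auto simp: r1_def find_Some_iff)
    have r2C: "\<And>z. r2 = Some z \<Longrightarrow> z \<notin> C" by (auto simp: r2_def find_Some_iff)
    have fe: "\<And>h t. (\<forall>y. (h y = (2::nat)) = (y \<in> C)) \<Longrightarrow> find (\<lambda>y. h y \<noteq> 2) t = find (\<lambda>y. y \<notin> C) t"
      by (metis (mono_tags) find_cong)
    show False
    proof (cases "x1 \<in> C")
      case True
      define h where "h = (\<lambda>z. if z \<in> C then 2 else if Some z = r1 then 4 else 0::nat)"
      have hC: "\<forall>y. (h y = 2) = (y \<in> C)" by (simp add: h_def)
      have "eval_word T_mult h (x1 # t1) = eval_word T_mult h (x2 # t2)" by (rule ev) (simp add: h_def)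
      then have "(case r1 of None \<Rightarrow> h x1 | Some z \<Rightarrow> T_mult (h x1) (h z)) =
                 (case r2 of None \<Rightarrow> h x1 | Some z \<Rightarrow> T_mult (h x1) (h z))"
        unfolding x12[symmetric] by (simp add: T_formula fe[OF hC] r1_def r2_def)
      then show False using ne True r1C r2C
        by (auto simp: h_def T_mult_def split: option.splits if_splits)
    next
      case False
      define mk where "mk = (if r1 = Some x1 then r2 else r1)"
      define h where "h = (\<lambda>z. if z \<in> C then 2 else if z = x1 then 1 else if Some z = mk then 4 else 0::nat)"
      have hC: "\<forall>y. (h y = 2) = (y \<in> C)" by (simp add: h_def)
      have "eval_word T_mult h (x1 # t1) = eval_word T_mult h (x2 # t2)" by (rule ev) (simp add: h_def)
      then have "(case r1 of None \<Rightarrow> h x1 | Some z \<Rightarrow> T_mult (h x1) (h z)) =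
                 (case r2 of None \<Rightarrow> h x1 | Some z \<Rightarrow> T_mult (h x1) (h z))"
        unfolding x12[symmetric] by (simp add: T_formula fe[OF hC] r1_def r2_def)
      moreover have key: "\<And>r. (\<forall>z. r = Some z \<longrightarrow> z \<notin> C) \<Longrightarrow>
          (case r of None \<Rightarrow> h x1 | Some z \<Rightarrow> T_mult (h x1) (h z)) =
          (case r of None \<Rightarrow> 1 | Some z \<Rightarrow> if z \<noteq> x1 \<and> Some z = mk then 3 else 0)"
        using False by (auto simp: h_def T_mult_def split: option.splits)
      ultimately have "(case r1 of None \<Rightarrow> 1 | Some z \<Rightarrow> if z \<noteq> x1 \<and> Some z = mk then 3 else 0) =
          (case r2 of None \<Rightarrow> 1 | Some z \<Rightarrow> if z \<noteq> x1 \<and> Some z = mk then 3 else (0::nat))"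
        using r1C r2C by (metis (no_types, lifting))
      then show False using ne unfolding mk_def
        by (cases r1; cases r2) (auto split: if_splits)
    qed
  qed
  then show ?thesis using x12 by simp
qed

lemma T_sat_iff:
  assumes "u \<noteq> []" "v \<noteq> []"
  shows "satisfies T_sgrp u v \<longleftrightarrow> derivable E0 u v"
proof
  assume "derivable E0 u v"
  then show "satisfies T_sgrp u v"
    using soundness[OF _ E0_ne T_sat_ax] T_semigroup unfolding finite_semigroup_def by blast
next
  assume s: "satisfies T_sgrp u v"
  obtain x1 t1 where u: "u = x1 # t1" using assms(1) by (cases u) auto
  obtain x2 t2 where v: "v = x2 # t2" using assms(2) by (cases v) auto
  have c: "x1 = x2" "rdC {} t1 = rdC {} t2" using T_char[OF s[unfolded u v]] find_eq_rdC by auto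
  have "derivable E0 u (x1 # rdC {} t1)" unfolding u by (rule nf_deriv) auto
  moreover have "derivable E0 v (x1 # rdC {} t1)" unfolding v c by (rule nf_deriv) auto
  ultimately show "derivable E0 u v" using derivable.sym derivable.trans by blast
qed



lemma T_sat_of_find:
  assumes "x1 = x2" "\<forall>C. find (\<lambda>y. y \<notin> C) t1 = find (\<lambda>y. y \<notin> C) t2"
  shows "satisfies T_sgrp (x1 # t1) (x2 # t2)"
proof -
  have c: "rdC {} t1 = rdC {} t2" using find_eq_rdC assms(2) by blast
  have "derivable E0 (x1 # t1) (x1 # rdC {} t1)" by (rule nf_deriv) auto
  moreover have "derivable E0 (x2 # t2) (x1 # rdC {} t1)" unfolding c assms(1) by (rule nf_deriv) auto
  ultimately have "derivable E0 (x1 # t1) (x2 # t2)" using derivable.sym derivable.trans by blast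
  then show ?thesis using T_sat_iff by blast
qed

lemma rdC_prefix: "set xs \<subseteq> D \<Longrightarrow> rdC D (xs @ zs) = rdC D zs"
  by (induction xs) auto

lemma rdC_single: "set ys \<subseteq> insert b D \<Longrightarrow> b \<in> set ys \<Longrightarrow> b \<notin> D \<Longrightarrow> rdC D ys = [b]"
proof (induction ys)
  case (Cons y ys)
  show ?case
  proof (cases "y = b")
    case True
    have "rdC (insert b D) ys = []" using Cons.prems(1) by (subst rdC_prefix[where zs="[]", simplified, symmetric]) auto
    then show ?thesis using True Cons.prems by simp
  next
    case False then show ?thesis using Cons by auto
  qed
qed simp

lemma find_split: "find P X = Some a \<Longrightarrow> \<exists>xs ys. X = xs @ a # ys \<and> (\<forall>z\<in>set xs. \<not> P z) \<and> P a"
proof (induction X)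
  case (Cons x X)
  show ?case
  proof (cases "P x")
    case True then show ?thesis using Cons.prems by (intro exI[of _ "[]"] exI[of _ X]) auto
  next
    case False
    then obtain xs ys where "X = xs @ a # ys" "\<forall>z\<in>set xs. \<not> P z" "P a" using Cons by auto
    then show ?thesis using False by (intro exI[of _ "x # xs"] exI[of _ ys]) auto
  qed
qed simp

lemma rdC_X:
  assumes "set X \<subseteq> {0,1,2}" "0 \<in> set X" "2 \<in> set X" "find (\<lambda>y. y \<noteq> 1) X = Some a" "a \<in> {0,2}"
  shows "rdC {} (1 # X) = [1, a, 2 - a]"
proof -
  obtain xs ys where X: "X = xs @ a # ys" "\<forall>z\<in>set xs. z = 1"
    using find_split[OF assms(4)] by auto
  have "rdC {} (1 # X) = 1 # rdC {1} (xs @ a # ys)" using X by simp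
  also have "\<dots> = 1 # rdC {1} (a # ys)" using X(2) by (subst rdC_prefix) auto
  also have "\<dots> = 1 # a # rdC {a, 1} ys" using assms(5) by auto
  also have "rdC {a, 1} ys = [2 - a]"
  proof (rule rdC_single)
    show "set ys \<subseteq> insert (2 - a) {a, 1}" using assms(1,5) X by auto
    show "2 - a \<in> set ys" using assms(2,3,5) X by auto
    show "2 - a \<notin> {a, 1}" using assms(5) by auto
  qed
  finally show ?thesis .
qed

lemma K_final:
  assumes d: "derivable E (0#1#X1) (0#1#X2)"
    and ax: "([0, 1, 1], [0, 1]) \<in> E" "([0, 1, 2], [0, 1, 2, 1]) \<in> E"
    and X1: "set X1 \<subseteq> {0,1,2}" "0 \<in> set X1" "2 \<in> set X1" "find (\<lambda>y. y \<noteq> 1) X1 = Some a1"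
    and X2: "set X2 \<subseteq> {0,1,2}" "0 \<in> set X2" "2 \<in> set X2" "find (\<lambda>y. y \<noteq> 1) X2 = Some a2"
    and a: "a1 \<in> {0,2}" "a2 \<in> {0,2}" "a1 \<noteq> a2"
  shows "derivable E [0,1,2,0] [0,1,0,2]"
proof -
  have n1: "derivable E (0#1#X1) (0 # [1, a1, 2 - a1])"
    using nf_deriv[OF ax, of 0 "1#X1"] rdC_X[OF X1 a(1)] by simp
  have n2: "derivable E (0#1#X2) (0 # [1, a2, 2 - a2])"
    using nf_deriv[OF ax, of 0 "1#X2"] rdC_X[OF X2 a(2)] by simp
  have "derivable E (0 # [1, a1, 2 - a1]) (0#1#X2)"
    by (rule derivable.trans[OF derivable.sym[OF n1] d])
  then have "derivable E (0 # [1, a1, 2 - a1]) (0 # [1, a2, 2 - a2])"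
    by (rule derivable.trans[OF _ n2])
  then show ?thesis using a by (auto intro: derivable.sym)
qed

lemma find_concat:
  assumes "\<forall>v\<in>C. \<sigma> v = [1]" "\<forall>v. v \<notin> C \<longrightarrow> \<sigma> v \<noteq> [] \<and> hd (\<sigma> v) \<noteq> 1"
  shows "find (\<lambda>y. y \<noteq> 1) (concat (map \<sigma> t) @ M) =
    (case find (\<lambda>v. v \<notin> C) t of None \<Rightarrow> find (\<lambda>y. y \<noteq> (1::nat)) M | Some v \<Rightarrow> Some (hd (\<sigma> v)))"
proof (induction t)
  case (Cons v t)
  show ?case
  proof (cases "v \<in> C")
    case True then show ?thesis using Cons assms(1) by simp
  next
    case False
    then obtain c cs where "\<sigma> v = c # cs" "c \<noteq> 1" using assms(2) by (cases "\<sigma> v") auto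
    then show ?thesis using False by simp
  qed
qed simp



lemma deriv_ctx:
  assumes "derivable E u v" "\<forall>x. \<sigma> x \<noteq> []" "M \<noteq> []"
  shows "derivable E (L @ subst_word \<sigma> u @ M) (L @ subst_word \<sigma> v @ M)"
proof -
  have "derivable E (subst_word \<sigma> u @ M) (subst_word \<sigma> v @ M)"
    by (rule derivable.mult_right[OF derivable.subst[OF assms(1,2)] assms(3)])
  then show ?thesis by (cases "L = []") (auto dest: derivable.mult_left[where w=L])
qed

lemma K0:
  assumes S: "is_semigroup S" and ax: "\<forall>(u,v)\<in>E0. satisfies S u v"
    and fail: "\<not> satisfies S [0,1,2,0] [0,1,0,2]"
    and sw: "satisfies S w1 w2" "w1 \<noteq> []" "w2 \<noteq> []"
  shows "satisfies T_sgrp w1 w2"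
proof (rule ccontr)
  assume nT: "\<not> satisfies T_sgrp w1 w2"
  define E' where "E' = insert (w1, w2) E0"
  have E'ne: "\<forall>(u,v)\<in>E'. u \<noteq> [] \<and> v \<noteq> []" using sw by (auto simp: E'_def)
  have E'sat: "\<forall>(u,v)\<in>E'. satisfies S u v" using sw ax by (auto simp: E'_def)
  have ax': "([0, 1, 1], [0, 1]) \<in> E'" "([0, 1, 2], [0, 1, 2, 1]) \<in> E'" by (auto simp: E'_def)
  have dw: "derivable E' w1 w2" by (rule derivable.ax) (simp add: E'_def)
  obtain x1 t1 where w1: "w1 = x1 # t1" using sw(2) by (cases w1) auto
  obtain x2 t2 where w2: "w2 = x2 # t2" using sw(3) by (cases w2) auto
  have "\<exists>X1 X2 a1 a2. derivable E' (0#1#X1) (0#1#X2)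
      \<and> set X1 \<subseteq> {0,1,2} \<and> 0 \<in> set X1 \<and> 2 \<in> set X1 \<and> find (\<lambda>y. y \<noteq> 1) X1 = Some a1
      \<and> set X2 \<subseteq> {0,1,2} \<and> 0 \<in> set X2 \<and> 2 \<in> set X2 \<and> find (\<lambda>y. y \<noteq> 1) X2 = Some a2
      \<and> a1 \<in> {0,2} \<and> a2 \<in> {0,2} \<and> a1 \<noteq> a2"
  proof (cases "x1 = x2")
    case False
    define \<sigma> where "\<sigma> = (\<lambda>v. if v = x1 then [2] else [0::nat])"
    have s: "\<forall>x. \<sigma> x \<noteq> []" by (simp add: \<sigma>_def)
    have d: "derivable E' ([0,1] @ subst_word \<sigma> w1 @ [0,2]) ([0,1] @ subst_word \<sigma> w2 @ [0,2])"
      by (rule deriv_ctx[OF dw s]) simp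
    have cs: "\<And>t. set (concat (map \<sigma> t)) \<subseteq> {0,2}" by (auto simp: \<sigma>_def)
    show ?thesis
      apply (rule exI[of _ "2 # concat (map \<sigma> t1) @ [0,2]"], rule exI[of _ "0 # concat (map \<sigma> t2) @ [0,2]"])
      apply (rule exI[of _ 2], rule exI[of _ 0])
      using d cs[of t1] cs[of t2] False by (auto simp: w1 w2 subst_word_def \<sigma>_def)
  next
    case True
    then obtain C where C: "find (\<lambda>y. y \<notin> C) t1 \<noteq> find (\<lambda>y. y \<notin> C) t2"
      using nT T_sat_of_find w1 w2 by blast
    define r1 where "r1 = find (\<lambda>y. y \<notin> C) t1"
    define r2 where "r2 = find (\<lambda>y. y \<notin> C) t2"
    have ne: "r1 \<noteq> r2" using C by (simp add: r1_def r2_def)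
    define mk where "mk = (if r1 = Some x1 then r2 else r1)"
    define \<sigma> where "\<sigma> = (\<lambda>v. if v \<in> C then [1] else if v = x1 then [0,1] else if Some v = mk then [2] else [0::nat])"
    define k where "k = (\<lambda>r. case r of None \<Rightarrow> None | Some v \<Rightarrow> Some (if v = x1 then 0 else if Some v = mk then 2 else (0::nat)))"
    define M where "M = (if k r1 = None \<and> k r2 = Some 0 \<or> k r2 = None \<and> k r1 = Some 0 then [2,0] else [0,2::nat])"
    define L where "L = (if x1 \<in> C then [0] else ([]::nat list))"
    have kne: "k r1 \<noteq> k r2" using ne unfolding k_def mk_def
      by (cases r1; cases r2) (auto split: if_splits)
    have s: "\<forall>x. \<sigma> x \<noteq> []" by (simp add: \<sigma>_def)
    have Lx: "L @ \<sigma> x1 = [0,1]" by (simp add: L_def \<sigma>_def)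
    have r1C: "\<And>z. r1 = Some z \<Longrightarrow> z \<notin> C" by (auto simp: r1_def find_Some_iff)
    have r2C: "\<And>z. r2 = Some z \<Longrightarrow> z \<notin> C" by (auto simp: r2_def find_Some_iff)
    have fc: "\<And>t. find (\<lambda>y. y \<noteq> 1) (concat (map \<sigma> t) @ M) =
      (case find (\<lambda>v. v \<notin> C) t of None \<Rightarrow> find (\<lambda>y. y \<noteq> (1::nat)) M | Some v \<Rightarrow> Some (hd (\<sigma> v)))"
      by (rule find_concat) (auto simp: \<sigma>_def)
    have hM: "find (\<lambda>y. y \<noteq> (1::nat)) M = Some (hd M)" by (simp add: M_def)
    have kv: "\<And>r. (\<And>z. r = Some z \<Longrightarrow> z \<notin> C) \<Longrightarrow>
      (case r of None \<Rightarrow> find (\<lambda>y. y \<noteq> (1::nat)) M | Some v \<Rightarrow> Some (hd (\<sigma> v))) =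
      Some (case k r of None \<Rightarrow> hd M | Some a \<Rightarrow> a)"
      subgoal for r using hM by (cases r) (auto simp: k_def \<sigma>_def)
      done
    have kin: "\<And>r. k r \<in> {None, Some 0, Some 2}" unfolding k_def
      subgoal for r by (cases r) auto
      done
    define a1 where "a1 = (case k r1 of None \<Rightarrow> hd M | Some a \<Rightarrow> a)"
    define a2 where "a2 = (case k r2 of None \<Rightarrow> hd M | Some a \<Rightarrow> a)"
    have aa: "a1 \<in> {0,2}" "a2 \<in> {0,2}" "a1 \<noteq> a2"
      using kin[of r1] kin[of r2] kne unfolding a1_def a2_def M_def by auto
    have f1: "find (\<lambda>y. y \<noteq> 1) (concat (map \<sigma> t1) @ M) = Some a1"
      using fc[of t1] kv[OF r1C] by (simp add: r1_def[symmetric] a1_def)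
    have f2: "find (\<lambda>y. y \<noteq> 1) (concat (map \<sigma> t2) @ M) = Some a2"
      using fc[of t2] kv[OF r2C] by (simp add: r2_def[symmetric] a2_def)
    have d: "derivable E' (L @ subst_word \<sigma> w1 @ M) (L @ subst_word \<sigma> w2 @ M)"
      by (rule deriv_ctx[OF dw s]) (simp add: M_def)
    have ew: "\<And>t. L @ subst_word \<sigma> (x1 # t) @ M = 0 # 1 # (concat (map \<sigma> t) @ M)"
      using Lx by (simp add: subst_word_def)
    have cs: "\<And>t. set (concat (map \<sigma> t) @ M) \<subseteq> {0,1,2}" by (auto simp: \<sigma>_def M_def)
    have M02: "0 \<in> set M" "2 \<in> set M" by (auto simp: M_def)
    have d': "derivable E' (0 # 1 # (concat (map \<sigma> t1) @ M)) (0 # 1 # (concat (map \<sigma> t2) @ M))"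
      using d unfolding w1 w2 True[symmetric] ew .
    show ?thesis
      apply (rule exI[of _ "concat (map \<sigma> t1) @ M"], rule exI[of _ "concat (map \<sigma> t2) @ M"])
      apply (rule exI[of _ a1], rule exI[of _ a2])
      using d' cs[of t1] cs[of t2] M02 f1 f2 aa by simp
  qed
  then obtain X1 X2 a1 a2 where "derivable E' (0#1#X1) (0#1#X2)"
      "set X1 \<subseteq> {0,1,2}" "0 \<in> set X1" "2 \<in> set X1" "find (\<lambda>y. y \<noteq> 1) X1 = Some a1"
      "set X2 \<subseteq> {0,1,2}" "0 \<in> set X2" "2 \<in> set X2" "find (\<lambda>y. y \<noteq> 1) X2 = Some a2"
      "a1 \<in> {0,2}" "a2 \<in> {0,2}" "a1 \<noteq> a2" by blast
  then have "derivable E' [0,1,2,0] [0,1,0,2]" by (intro K_final[OF _ ax']) auto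
  then have "satisfies S [0,1,2,0] [0,1,0,2]" by (rule soundness[OF S E'ne E'sat])
  then show False using fail by simp
qed



lemma pvD:
  assumes "pseudovariety V"
  shows pvD1: "\<forall>S\<in>V. finite_semigroup S"
   and pvD2: "\<forall>S. finite_semigroup S \<and> card (fst S) = 1 \<longrightarrow> S \<in> V"
   and pvD3: "\<forall>S1\<in>V. \<forall>S2\<in>V. \<forall>P \<phi>. finite_semigroup P \<and> is_iso P (prod_sgrp S1 S2) \<phi> \<longrightarrow> P \<in> V"
   and pvD4: "\<forall>S\<in>V. \<forall>B. B \<noteq> {} \<and> B \<subseteq> fst S \<and> (\<forall>x\<in>B. \<forall>y\<in>B. snd S x y \<in> B) \<longrightarrow> (B, snd S) \<in> V"
   and pvD5: "\<forall>S\<in>V. \<forall>S' \<phi>. finite_semigroup S' \<and> is_hom S S' \<phi> \<and> \<phi> ` fst S = fst S' \<longrightarrow> S' \<in> V"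
  using assms unfolding pseudovariety_def by - (elim conjE, assumption)+

definition Mod :: "(nat list \<times> nat list) set \<Rightarrow> nat sgrp set" where
  "Mod I = {S. finite_semigroup S \<and> (\<forall>(u,v)\<in>I. satisfies S u v)}"

lemma sat_card1:
  assumes "is_semigroup S" "card (fst S) = 1" "u \<noteq> []" "v \<noteq> []"
  shows "satisfies S u v"
  unfolding satisfies_def
proof (intro allI impI)
  fix h :: "nat \<Rightarrow> _" assume h: "\<forall>x. h x \<in> fst S"
  obtain z where z: "fst S = {z}" using assms(2) card_1_singletonE by blast
  show "eval_word (snd S) h u = eval_word (snd S) h v"
    using eval_in[OF assms(1) h assms(3)] eval_in[OF assms(1) h assms(4)] z by simp
qed

lemma eval_prod:
  "u \<noteq> [] \<Longrightarrow> eval_word (snd (prod_sgrp S1 S2)) g u =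
     (eval_word (snd S1) (fst \<circ> g) u, eval_word (snd S2) (snd \<circ> g) u)"
proof (induction u)
  case (Cons x w)
  then show ?case by (cases "w = []") (auto simp: eval_Cons prod_sgrp_def split: prod.splits)
qed simp

lemma eval_hom:
  assumes "is_semigroup S" "is_hom S S' \<phi>" "\<forall>x. h x \<in> fst S" "u \<noteq> []"
  shows "\<phi> (eval_word (snd S) h u) = eval_word (snd S') (\<phi> \<circ> h) u"
  using assms(4)
proof (induction u)
  case (Cons x w)
  show ?case
  proof (cases "w = []")
    case False
    then show ?thesis using Cons eval_in[OF assms(1,3) False] assms(2,3)
      by (simp add: eval_Cons is_hom_def)
  qed simp
qed simp

lemma sat_prod:
  assumes P: "finite_semigroup P" and iso: "is_iso P (prod_sgrp S1 S2) \<phi>"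
    and s1: "satisfies S1 u v" and s2: "satisfies S2 u v" and ne: "u \<noteq> []" "v \<noteq> []"
  shows "satisfies P u v"
  unfolding satisfies_def
proof (intro allI impI)
  fix h :: "nat \<Rightarrow> _" assume h: "\<forall>x. h x \<in> fst P"
  have PS: "is_semigroup P" using P by (simp add: finite_semigroup_def)
  have hom: "is_hom P (prod_sgrp S1 S2) \<phi>" and bij: "bij_betw \<phi> (fst P) (fst (prod_sgrp S1 S2))"
    using iso by (auto simp: is_iso_def)
  have hi: "\<forall>x. (\<phi> \<circ> h) x \<in> fst S1 \<times> fst S2" using hom h by (auto simp: is_hom_def prod_sgrp_def)
  have "\<forall>x. (fst \<circ> (\<phi> \<circ> h)) x \<in> fst S1" using hi by (auto simp: mem_Times_iff)
  then have a1: "eval_word (snd S1) (fst \<circ> (\<phi> \<circ> h)) u = eval_word (snd S1) (fst \<circ> (\<phi> \<circ> h)) v"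
    using s1 unfolding satisfies_def by blast
  have "\<forall>x. (snd \<circ> (\<phi> \<circ> h)) x \<in> fst S2" using hi by (auto simp: mem_Times_iff)
  then have a2: "eval_word (snd S2) (snd \<circ> (\<phi> \<circ> h)) u = eval_word (snd S2) (snd \<circ> (\<phi> \<circ> h)) v"
    using s2 unfolding satisfies_def by blast
  have "\<phi> (eval_word (snd P) h u) = \<phi> (eval_word (snd P) h v)"
    unfolding eval_hom[OF PS hom h ne(1)] eval_hom[OF PS hom h ne(2)] eval_prod[OF ne(1)] eval_prod[OF ne(2)]
    using a1 a2 by simp
  moreover have "eval_word (snd P) h u \<in> fst P" "eval_word (snd P) h v \<in> fst P"
    using eval_in[OF PS h] ne by auto
  ultimately show "eval_word (snd P) h u = eval_word (snd P) h v"
    using bij by (auto simp: bij_betw_def inj_on_def)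
qed

lemma sub_fs:
  assumes "finite_semigroup S" "B \<noteq> {}" "B \<subseteq> fst S" "\<forall>x\<in>B. \<forall>y\<in>B. snd S x y \<in> B"
  shows "finite_semigroup (B, snd S)"
  using assms unfolding finite_semigroup_def is_semigroup_def by (auto intro: finite_subset) blast

lemma sat_sub: "B \<subseteq> fst S \<Longrightarrow> satisfies S u v \<Longrightarrow> satisfies (B, snd S) u v"
  unfolding satisfies_def by auto

lemma sat_hom:
  assumes S: "is_semigroup S" and hom: "is_hom S S' \<phi>" and onto: "\<phi> ` fst S = fst S'"
    and s: "satisfies S u v" and ne: "u \<noteq> []" "v \<noteq> []"
  shows "satisfies S' u v"
  unfolding satisfies_def
proof (intro allI impI)
  fix h :: "nat \<Rightarrow> _" assume h: "\<forall>x. h x \<in> fst S'"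
  define g where "g = (\<lambda>x. SOME y. y \<in> fst S \<and> \<phi> y = h x)"
  have g: "\<forall>x. g x \<in> fst S \<and> \<phi> (g x) = h x"
  proof
    fix x
    have "h x \<in> \<phi> ` fst S" using h onto by auto
    then obtain y where "y \<in> fst S \<and> \<phi> y = h x" by auto
    then show "g x \<in> fst S \<and> \<phi> (g x) = h x" unfolding g_def by (rule someI)
  qed
  have gi: "\<forall>x. g x \<in> fst S" and hg: "\<phi> \<circ> g = h" using g by auto
  have "eval_word (snd S) g u = eval_word (snd S) g v" using s gi unfolding satisfies_def by blast
  then show "eval_word (snd S') h u = eval_word (snd S') h v"
    using eval_hom[OF S hom gi ne(1)] eval_hom[OF S hom gi ne(2)] hg by simp
qed

lemma pv_Mod:
  assumes I: "\<forall>(u,v)\<in>I. u \<noteq> [] \<and> v \<noteq> []"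
  shows "pseudovariety (Mod I)"
  unfolding pseudovariety_def
proof (intro conjI)
  show "\<forall>S\<in>Mod I. finite_semigroup S" by (simp add: Mod_def)
  show "\<forall>S. finite_semigroup S \<and> card (fst S) = 1 \<longrightarrow> S \<in> Mod I"
  proof (intro allI impI)
    fix S :: "nat sgrp" assume a: "finite_semigroup S \<and> card (fst S) = 1"
    have "\<forall>(u,v)\<in>I. satisfies S u v"
    proof (intro ballI, clarify)
      fix u v assume "(u,v) \<in> I"
      then show "satisfies S u v" using I a sat_card1 unfolding finite_semigroup_def by blast
    qed
    then show "S \<in> Mod I" using a by (simp add: Mod_def)
  qed
  show "\<forall>S1\<in>Mod I. \<forall>S2\<in>Mod I. \<forall>P \<phi>. finite_semigroup P \<and> is_iso P (prod_sgrp S1 S2) \<phi> \<longrightarrow> P \<in> Mod I"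
  proof (intro ballI allI impI)
    fix S1 S2 P :: "nat sgrp" and \<phi> :: "nat \<Rightarrow> nat \<times> nat" assume s: "S1 \<in> Mod I" "S2 \<in> Mod I" and a: "finite_semigroup P \<and> is_iso P (prod_sgrp S1 S2) \<phi>"
    have "\<forall>(u,v)\<in>I. satisfies P u v"
    proof (intro ballI, clarify)
      fix u v assume uv: "(u,v) \<in> I"
      then show "satisfies P u v" using I a s sat_prod[of P S1 S2 \<phi> u v] unfolding Mod_def by blast
    qed
    then show "P \<in> Mod I" using a by (simp add: Mod_def)
  qed
  show "\<forall>S\<in>Mod I. \<forall>B. B \<noteq> {} \<and> B \<subseteq> fst S \<and> (\<forall>x\<in>B. \<forall>y\<in>B. snd S x y \<in> B) \<longrightarrow> (B, snd S) \<in> Mod I"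
  proof (intro ballI allI impI)
    fix S B assume s: "S \<in> Mod I" and a: "B \<noteq> {} \<and> B \<subseteq> fst S \<and> (\<forall>x\<in>B. \<forall>y\<in>B. snd S x y \<in> B)"
    have f: "finite_semigroup (B, snd S)" using sub_fs s a unfolding Mod_def by blast
    have "\<forall>(u,v)\<in>I. satisfies (B, snd S) u v" using sat_sub a s unfolding Mod_def by blast
    then show "(B, snd S) \<in> Mod I" using f by (simp add: Mod_def)
  qed
  show "\<forall>S\<in>Mod I. \<forall>S' \<phi>. finite_semigroup S' \<and> is_hom S S' \<phi> \<and> \<phi> ` fst S = fst S' \<longrightarrow> S' \<in> Mod I"
  proof (intro ballI allI impI)
    fix S S' :: "nat sgrp" and \<phi> :: "nat \<Rightarrow> nat" assume s: "S \<in> Mod I" and a: "finite_semigroup S' \<and> is_hom S S' \<phi> \<and> \<phi> ` fst S = fst S'"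
    have "\<forall>(u,v)\<in>I. satisfies S' u v"
    proof (intro ballI, clarify)
      fix u v assume uv: "(u,v) \<in> I"
      then show "satisfies S' u v" using I a s sat_hom[of S S' \<phi> u v] unfolding Mod_def finite_semigroup_def by blast
    qed
    then show "S' \<in> Mod I" using a by (simp add: Mod_def)
  qed
qed

lemma pv_Inter:
  assumes "F \<noteq> {}" "\<forall>V\<in>F. pseudovariety V"
  shows "pseudovariety (\<Inter>F)"
proof -
  have p: "\<And>V. V \<in> F \<Longrightarrow> pseudovariety V" using assms(2) by blast
  obtain V0 where V0: "V0 \<in> F" using assms(1) by blast
  show ?thesis unfolding pseudovariety_def
  proof (intro conjI ballI allI impI InterI)
    fix S assume "S \<in> \<Inter>F"
    then have "S \<in> V0" using V0 by blast
    then show "finite_semigroup S" by (rule pvD1[OF p[OF V0], rule_format])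
  next
    fix S :: "nat sgrp" and V assume "finite_semigroup S \<and> card (fst S) = 1" "V \<in> F"
    then show "S \<in> V" using pvD2[OF p[of V], rule_format] by blast
  next
    fix S1 S2 P :: "nat sgrp" and \<phi> :: "nat \<Rightarrow> nat \<times> nat" and V
    assume a: "S1 \<in> \<Inter>F" "S2 \<in> \<Inter>F" "finite_semigroup P \<and> is_iso P (prod_sgrp S1 S2) \<phi>" "V \<in> F"
    have "S1 \<in> V" "S2 \<in> V" using a by auto
    then show "P \<in> V" using pvD3[OF p[OF a(4)], rule_format] a(3) by blast
  next
    fix S :: "nat sgrp" and B V
    assume a: "S \<in> \<Inter>F" "B \<noteq> {} \<and> B \<subseteq> fst S \<and> (\<forall>x\<in>B. \<forall>y\<in>B. snd S x y \<in> B)" "V \<in> F"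
    have "S \<in> V" using a by auto
    then show "(B, snd S) \<in> V" using pvD4[OF p[OF a(3)], rule_format] a(2) by blast
  next
    fix S S' :: "nat sgrp" and \<phi> :: "nat \<Rightarrow> nat" and V
    assume a: "S \<in> \<Inter>F" "finite_semigroup S' \<and> is_hom S S' \<phi> \<and> \<phi> ` fst S = fst S'" "V \<in> F"
    have "S \<in> V" using a by auto
    then show "S' \<in> V" using pvD5[OF p[OF a(3)], rule_format] a(2) by blast
  qed
qed

lemma pv_Int: "pseudovariety A \<Longrightarrow> pseudovariety B \<Longrightarrow> pseudovariety (A \<inter> B)"
proof -
  assume "pseudovariety A" "pseudovariety B"
  then have "pseudovariety (\<Inter>{A, B})" by (intro pv_Inter) auto
  moreover have "\<Inter>{A, B} = A \<inter> B" by simp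
  ultimately show ?thesis by simp
qed

lemma T_Mod: "T_sgrp \<in> Mod E0"
  using T_semigroup T_sat_ax by (simp add: Mod_def)

lemma T_in_U: "T_sgrp \<in> generated_pv T_sgrp"
  by (simp add: generated_pv_def)

lemma U_least: "pseudovariety V \<Longrightarrow> T_sgrp \<in> V \<Longrightarrow> generated_pv T_sgrp \<subseteq> V"
  by (auto simp: generated_pv_def)

lemma pv_U: "pseudovariety (generated_pv T_sgrp)"
  unfolding generated_pv_def
  by (rule pv_Inter) (use pv_Mod[OF E0_ne] T_Mod in auto)

lemma U_Mod: "generated_pv T_sgrp \<subseteq> Mod E0"
  by (rule U_least[OF pv_Mod[OF E0_ne] T_Mod])



definition encprod :: "nat sgrp \<Rightarrow> nat sgrp \<Rightarrow> nat sgrp" where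
  "encprod S1 S2 = (prod_encode ` (fst S1 \<times> fst S2),
     \<lambda>x y. prod_encode (snd S1 (fst (prod_decode x)) (fst (prod_decode y)),
                        snd S2 (snd (prod_decode x)) (snd (prod_decode y))))"

lemma enc_mult: "snd (encprod S1 S2) (prod_encode (a, b)) (prod_encode (c, d)) = prod_encode (snd S1 a c, snd S2 b d)"
  by (simp add: encprod_def prod_encode_inverse)

lemma enc_fs:
  assumes "finite_semigroup S1" "finite_semigroup S2"
  shows "finite_semigroup (encprod S1 S2)"
proof -
  have c1: "\<forall>x\<in>fst S1. \<forall>y\<in>fst S1. snd S1 x y \<in> fst S1"
   and a1: "\<forall>x\<in>fst S1. \<forall>y\<in>fst S1. \<forall>z\<in>fst S1. snd S1 (snd S1 x y) z = snd S1 x (snd S1 y z)"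
   and n1: "fst S1 \<noteq> {}" and f1: "finite (fst S1)"
    using assms(1) unfolding finite_semigroup_def is_semigroup_def by auto
  have c2: "\<forall>x\<in>fst S2. \<forall>y\<in>fst S2. snd S2 x y \<in> fst S2"
   and a2: "\<forall>x\<in>fst S2. \<forall>y\<in>fst S2. \<forall>z\<in>fst S2. snd S2 (snd S2 x y) z = snd S2 x (snd S2 y z)"
   and n2: "fst S2 \<noteq> {}" and f2: "finite (fst S2)"
    using assms(2) unfolding finite_semigroup_def is_semigroup_def by auto
  show ?thesis
    unfolding finite_semigroup_def is_semigroup_def
  proof (intro conjI ballI)
    show "fst (encprod S1 S2) \<noteq> {}" using n1 n2 by (simp add: encprod_def)
    show "finite (fst (encprod S1 S2))" using f1 f2 by (simp add: encprod_def)
  next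
    fix x y assume "x \<in> fst (encprod S1 S2)" "y \<in> fst (encprod S1 S2)"
    then obtain a b c d where "x = prod_encode (a, b)" "y = prod_encode (c, d)"
      "a \<in> fst S1" "b \<in> fst S2" "c \<in> fst S1" "d \<in> fst S2" by (auto simp: encprod_def)
    then show "snd (encprod S1 S2) x y \<in> fst (encprod S1 S2)"
      using c1 c2 by (simp add: enc_mult) (simp add: encprod_def)
  next
    fix x y z assume "x \<in> fst (encprod S1 S2)" "y \<in> fst (encprod S1 S2)" "z \<in> fst (encprod S1 S2)"
    then obtain a b c d e f where "x = prod_encode (a, b)" "y = prod_encode (c, d)" "z = prod_encode (e, f)"
      "a \<in> fst S1" "b \<in> fst S2" "c \<in> fst S1" "d \<in> fst S2" "e \<in> fst S1" "f \<in> fst S2"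
      by (auto simp: encprod_def)
    then show "snd (encprod S1 S2) (snd (encprod S1 S2) x y) z = snd (encprod S1 S2) x (snd (encprod S1 S2) y z)"
      using a1 a2 by (simp add: enc_mult)
  qed
qed

lemma enc_iso: "is_iso (encprod S1 S2) (prod_sgrp S1 S2) prod_decode"
  unfolding is_iso_def is_hom_def
proof (intro conjI ballI)
  fix x assume "x \<in> fst (encprod S1 S2)"
  then show "prod_decode x \<in> fst (prod_sgrp S1 S2)"
    by (auto simp: encprod_def prod_sgrp_def prod_encode_inverse)
next
  fix x y assume "x \<in> fst (encprod S1 S2)" "y \<in> fst (encprod S1 S2)"
  then obtain a b c d where "x = prod_encode (a, b)" "y = prod_encode (c, d)" by (auto simp: encprod_def)
  then show "prod_decode (snd (encprod S1 S2) x y) = snd (prod_sgrp S1 S2) (prod_decode x) (prod_decode y)"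
    by (simp add: enc_mult prod_encode_inverse prod_sgrp_def)
next
  have "inj_on prod_decode (fst (encprod S1 S2))" using inj_prod_decode by (auto intro: inj_on_subset)
  moreover have "prod_decode ` fst (encprod S1 S2) = fst (prod_sgrp S1 S2)"
    by (simp add: encprod_def prod_sgrp_def image_image prod_encode_inverse)
  ultimately show "bij_betw prod_decode (fst (encprod S1 S2)) (fst (prod_sgrp S1 S2))"
    by (simp add: bij_betw_def)
qed

lemma enc_in: "pseudovariety V \<Longrightarrow> S1 \<in> V \<Longrightarrow> S2 \<in> V \<Longrightarrow> encprod S1 S2 \<in> V"
  using pvD3[of V, rule_format, of S1 S2 "encprod S1 S2" prod_decode] pvD1[of V] enc_fs enc_iso by blast

definition triv :: "nat sgrp" where "triv = ({0}, \<lambda>_ _. 0)"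

lemma triv_in: "pseudovariety V \<Longrightarrow> triv \<in> V"
  by (rule pvD2[of V, rule_format]) (auto simp: triv_def finite_semigroup_def is_semigroup_def)

fun Spow :: "nat sgrp \<Rightarrow> nat \<Rightarrow> nat sgrp" where
  "Spow S 0 = triv"
| "Spow S (Suc n) = encprod S (Spow S n)"

fun Hs :: "(nat \<Rightarrow> nat) list \<Rightarrow> nat \<Rightarrow> nat" where
  "Hs [] = (\<lambda>x. 0)"
| "Hs (\<alpha> # as) = (\<lambda>x. prod_encode (\<alpha> x, Hs as x))"

lemma Spow_in: "pseudovariety V \<Longrightarrow> S \<in> V \<Longrightarrow> Spow S n \<in> V"
  by (induction n) (auto intro: triv_in enc_in)

lemma eval_enc:
  "u \<noteq> [] \<Longrightarrow> eval_word (snd (encprod S1 S2)) (\<lambda>x. prod_encode (h1 x, h2 x)) u =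
     prod_encode (eval_word (snd S1) h1 u, eval_word (snd S2) h2 u)"
proof (induction u)
  case (Cons x w)
  then show ?case by (cases "w = []") (auto simp: eval_Cons enc_mult)
qed simp

lemma Hs_in: "\<forall>\<alpha>\<in>set as. \<forall>x. \<alpha> x \<in> fst S \<Longrightarrow> \<forall>x. Hs as x \<in> fst (Spow S (length as))"
  by (induction as) (auto simp: triv_def encprod_def)

lemma Hs_inj:
  assumes "u \<noteq> []" "v \<noteq> []"
    "eval_word (snd (Spow S (length as))) (Hs as) u = eval_word (snd (Spow S (length as))) (Hs as) v"
    "\<alpha> \<in> set as"
  shows "eval_word (snd S) \<alpha> u = eval_word (snd S) \<alpha> v"
  using assms(3,4)
proof (induction as)
  case (Cons \<beta> as)
  have "prod_encode (eval_word (snd S) \<beta> u, eval_word (snd (Spow S (length as))) (Hs as) u) =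
        prod_encode (eval_word (snd S) \<beta> v, eval_word (snd (Spow S (length as))) (Hs as) v)"
    using Cons.prems(1) eval_enc[OF assms(1)] eval_enc[OF assms(2)] by simp
  then have "eval_word (snd S) \<beta> u = eval_word (snd S) \<beta> v"
    "eval_word (snd (Spow S (length as))) (Hs as) u = eval_word (snd (Spow S (length as))) (Hs as) v"
    by (auto simp: prod_encode_eq)
  then show ?case using Cons by auto
qed simp

lemma eval_cong: "(\<forall>x\<in>set w. h x = g x) \<Longrightarrow> eval_word m h w = eval_word m g w"
proof (induction w)
  case (Cons x w) then show ?case by (cases "w = []") (auto simp: eval_Cons)
qed simp



lemma K:
  assumes V: "pseudovariety V" and SV: "S \<in> V" and ax: "\<forall>(u,v)\<in>E0. satisfies S u v"
    and fail: "\<not> satisfies S [0,1,2,0] [0,1,0,2]"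
  shows "T_sgrp \<in> V"
proof -
  have fs: "finite_semigroup S" using pvD1[OF V] SV by blast
  then have SS: "is_semigroup S" by (simp add: finite_semigroup_def)
  obtain s0 where s0: "s0 \<in> fst S" using SS unfolding is_semigroup_def by blast
  define A where "A = {\<alpha>::nat\<Rightarrow>nat. (\<forall>x::nat<3. \<alpha> x \<in> fst S) \<and> (\<forall>x\<ge>3. \<alpha> x = s0)}"
  define f where "f = (\<lambda>(a::nat, b::nat, c::nat). (\<lambda>x::nat. if x = 0 then a else if x = 1 then b else if x = 2 then c else s0))"
  have "A \<subseteq> f ` (fst S \<times> fst S \<times> fst S)"
  proof
    fix \<alpha> assume a: "\<alpha> \<in> A"
    have "\<alpha> = f (\<alpha> 0, \<alpha> 1, \<alpha> 2)"
    proof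
      fix x show "\<alpha> x = f (\<alpha> 0, \<alpha> 1, \<alpha> 2) x"
        using a unfolding A_def f_def by (cases "x < 3") (auto simp: less_Suc_eq numeral_3_eq_3)
    qed
    moreover have "(\<alpha> 0, \<alpha> 1, \<alpha> 2) \<in> fst S \<times> fst S \<times> fst S" using a by (auto simp: A_def)
    ultimately show "\<alpha> \<in> f ` (fst S \<times> fst S \<times> fst S)" by blast
  qed
  moreover have "finite (fst S)" using fs by (simp add: finite_semigroup_def)
  ultimately have "finite A" by (meson finite_SigmaI finite_imageI finite_subset)
  then obtain as where as: "set as = A" using finite_list by blast
  define P where "P = Spow S (length as)"
  have PV: "P \<in> V" unfolding P_def by (rule Spow_in[OF V SV])
  have PS: "is_semigroup P" using pvD1[OF V] PV by (simp add: finite_semigroup_def)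
  have Ain: "\<forall>\<alpha>\<in>set as. \<forall>x. \<alpha> x \<in> fst S"
  proof (intro ballI allI)
    fix \<alpha> x assume "\<alpha> \<in> set as"
    then have "\<alpha> \<in> A" using as by simp
    then show "\<alpha> x \<in> fst S" using s0 unfolding A_def by (cases "x < 3") auto
  qed
  have Hin: "\<forall>x. Hs as x \<in> fst P" unfolding P_def by (rule Hs_in[OF Ain])
  define ev where "ev = (\<lambda>w. eval_word (snd P) (Hs as) w)"
  define Wd where "Wd = {w::nat list. w \<noteq> [] \<and> set w \<subseteq> {0,1,2}}"
  define R where "R = ev ` Wd"
  define \<beta> where "\<beta> = (\<lambda>x::nat. if x = 0 then 1 else if x = 1 then 2 else 4::nat)"
  have \<beta>in: "\<forall>x. \<beta> x \<in> fst T_sgrp" by (simp add: \<beta>_def T_sgrp_def)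
  have TS: "is_semigroup T_sgrp" using T_semigroup by (simp add: finite_semigroup_def)
  have sndT: "snd T_sgrp = T_mult" by (simp add: T_sgrp_def)
  have wd: "eval_word T_mult \<beta> w1 = eval_word T_mult \<beta> w2"
    if w: "w1 \<in> Wd" "w2 \<in> Wd" "ev w1 = ev w2" for w1 w2
  proof -
    have ne: "w1 \<noteq> []" "w2 \<noteq> []" using w by (auto simp: Wd_def)
    have eqA: "\<forall>\<alpha>\<in>A. eval_word (snd S) \<alpha> w1 = eval_word (snd S) \<alpha> w2"
      using Hs_inj[OF ne, of S as] w(3) as unfolding ev_def P_def by blast
    have "satisfies S w1 w2" unfolding satisfies_def
    proof (intro allI impI)
      fix h :: "nat \<Rightarrow> nat" assume h: "\<forall>x. h x \<in> fst S"
      define \<alpha> where "\<alpha> = (\<lambda>x. if x < 3 then h x else s0)"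
      have "\<alpha> \<in> A" using h by (auto simp: A_def \<alpha>_def)
      moreover have "eval_word (snd S) h w1 = eval_word (snd S) \<alpha> w1"
        using w(1) by (intro eval_cong) (auto simp: Wd_def \<alpha>_def)
      moreover have "eval_word (snd S) h w2 = eval_word (snd S) \<alpha> w2"
        using w(2) by (intro eval_cong) (auto simp: Wd_def \<alpha>_def)
      ultimately show "eval_word (snd S) h w1 = eval_word (snd S) h w2" using eqA by simp
    qed
    then have "satisfies T_sgrp w1 w2" by (rule K0[OF SS ax fail _ ne])
    then show ?thesis using \<beta>in unfolding satisfies_def sndT by blast
  qed
  define \<phi> where "\<phi> = (\<lambda>r. eval_word T_mult \<beta> (SOME w. w \<in> Wd \<and> ev w = r))"
  have \<phi>eq: "\<phi> (ev w) = eval_word T_mult \<beta> w" if "w \<in> Wd" for w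
  proof -
    define w' where "w' = (SOME w'. w' \<in> Wd \<and> ev w' = ev w)"
    have "w' \<in> Wd \<and> ev w' = ev w"
      unfolding w'_def by (rule someI[of "\<lambda>w'. w' \<in> Wd \<and> ev w' = ev w" w]) (use that in blast)
    then have "eval_word T_mult \<beta> w' = eval_word T_mult \<beta> w" using wd[of w' w] that by blast
    then show ?thesis unfolding \<phi>_def w'_def[symmetric] .
  qed
  have evapp: "ev (w1 @ w2) = snd P (ev w1) (ev w2)" if "w1 \<in> Wd" "w2 \<in> Wd" for w1 w2
    using eval_append[OF PS Hin, of w1 w2] that unfolding ev_def Wd_def by simp
  have Tapp: "eval_word T_mult \<beta> (w1 @ w2) = T_mult (eval_word T_mult \<beta> w1) (eval_word T_mult \<beta> w2)"
    if "w1 \<in> Wd" "w2 \<in> Wd" for w1 w2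
    using eval_append[OF TS \<beta>in, of w1 w2] that unfolding Wd_def sndT by simp
  have Tin: "eval_word T_mult \<beta> w \<in> {0,1,2,3,4}" if "w \<in> Wd" for w
    using eval_in[OF TS \<beta>in, of w] that unfolding Wd_def sndT by (simp add: T_sgrp_def)
  have appW: "w1 @ w2 \<in> Wd" if "w1 \<in> Wd" "w2 \<in> Wd" for w1 w2 using that by (auto simp: Wd_def)
  have RV: "(R, snd P) \<in> V"
  proof (rule pvD4[OF V, rule_format, OF PV], intro conjI)
    show "R \<noteq> {}" unfolding R_def Wd_def by (auto intro!: exI[of _ "[0]"])
    show "R \<subseteq> fst P" unfolding R_def Wd_def ev_def using eval_in[OF PS Hin] by auto
    show "\<forall>x\<in>R. \<forall>y\<in>R. snd P x y \<in> R" unfolding R_def using evapp appW by (auto simp: image_iff) (metis)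
  qed
  have hom: "is_hom (R, snd P) T_sgrp \<phi>"
    unfolding is_hom_def
  proof (intro conjI ballI)
    fix x assume "x \<in> fst (R, snd P)"
    then obtain w where "w \<in> Wd" "x = ev w" by (auto simp: R_def)
    then show "\<phi> x \<in> fst T_sgrp" using \<phi>eq Tin by (simp add: T_sgrp_def)
  next
    fix x y assume "x \<in> fst (R, snd P)" "y \<in> fst (R, snd P)"
    then obtain w1 w2 where w: "w1 \<in> Wd" "x = ev w1" "w2 \<in> Wd" "y = ev w2" by (auto simp: R_def)
    have "\<phi> (snd (R, snd P) x y) = \<phi> (ev (w1 @ w2))" using evapp[OF w(1,3)] w by simp
    also have "\<dots> = T_mult (\<phi> x) (\<phi> y)"
      using \<phi>eq[OF appW[OF w(1,3)]] Tapp[OF w(1,3)] \<phi>eq[OF w(1)] \<phi>eq[OF w(3)] w by simp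
    finally show "\<phi> (snd (R, snd P) x y) = snd T_sgrp (\<phi> x) (\<phi> y)" using sndT by simp
  qed
  have onto: "\<phi> ` fst (R, snd P) = fst T_sgrp"
  proof
    show "\<phi> ` fst (R, snd P) \<subseteq> fst T_sgrp" using hom by (auto simp: is_hom_def)
    have w: "[0] \<in> Wd" "[1] \<in> Wd" "[2] \<in> Wd" "[0,0] \<in> Wd" "[0,2] \<in> Wd" by (auto simp: Wd_def)
    have "\<phi> (ev [0]) = 1" "\<phi> (ev [1]) = 2" "\<phi> (ev [2]) = 4" "\<phi> (ev [0,0]) = 0" "\<phi> (ev [0,2]) = 3"
      using \<phi>eq[OF w(1)] \<phi>eq[OF w(2)] \<phi>eq[OF w(3)] \<phi>eq[OF w(4)] \<phi>eq[OF w(5)]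
      by (simp_all add: \<beta>_def T_mult_def)
    moreover have "ev [0] \<in> R" "ev [1] \<in> R" "ev [2] \<in> R" "ev [0,0] \<in> R" "ev [0,2] \<in> R"
      using w unfolding R_def by auto
    ultimately show "fst T_sgrp \<subseteq> \<phi> ` fst (R, snd P)"
      unfolding T_sgrp_def by (auto simp: image_iff) (metis)+
  qed
  show ?thesis
    by (rule pvD5[OF V, rule_format, OF RV]) (use T_semigroup hom onto in auto)
qed



theorem proposition5p30:
  shows "(\<forall>u v. u \<noteq> [] \<and> v \<noteq> [] \<longrightarrow>
            (satisfies T_sgrp u v \<longleftrightarrow>
             derivable {([0, 1, 1], [0, 1]), ([0, 1, 2], [0, 1, 2, 1])} u v))
       \<and> maximal_subpv {S \<in> generated_pv T_sgrp. satisfies S [0, 1, 2, 0] [0, 1, 0, 2]}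
                       (generated_pv T_sgrp)
       \<and> (\<forall>V. maximal_subpv V (generated_pv T_sgrp) \<longrightarrow>
              V = {S \<in> generated_pv T_sgrp. satisfies S [0, 1, 2, 0] [0, 1, 0, 2]})"
proof -
  define U where "U = generated_pv T_sgrp"
  define W where "W = {S \<in> U. satisfies S [0, 1, 2, 0] [0, 1, 0, 2]}"
  have WI: "W = U \<inter> Mod {([0, 1, 2, 0], [0, 1, 0, 2])}"
    unfolding W_def Mod_def U_def using pv_U pvD1 by blast
  have pvW: "pseudovariety W" unfolding WI U_def
    by (rule pv_Int[OF pv_U pv_Mod]) simp
  have TU: "T_sgrp \<in> U" using T_in_U by (simp add: U_def)
  have TW: "T_sgrp \<notin> W"
  proof
    assume "T_sgrp \<in> W"
    then have sat: "satisfies T_sgrp [0, 1, 2, 0] [0, 1, 0, 2]" by (simp add: W_def)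
    define h0 where "h0 = (\<lambda>x::nat. if x = 0 then 1 else if x = 1 then 2 else (4::nat))"
    have hin: "\<forall>x. h0 x \<in> fst T_sgrp" by (simp add: h0_def T_sgrp_def)
    have "eval_word (snd T_sgrp) h0 [0, 1, 2, 0] = eval_word (snd T_sgrp) h0 [0, 1, 0, 2]"
      using sat hin unfolding satisfies_def by blast
    then show False by (simp add: T_mult_def T_sgrp_def h0_def)
  qed
  have WU: "W \<subset> U" using TU TW by (auto simp: W_def)
  have key: "V \<subseteq> W" if V: "pseudovariety V" "V \<subset> U" for V
  proof
    fix S assume SV: "S \<in> V"
    then have SU: "S \<in> U" using V by blast
    show "S \<in> W"
    proof (rule ccontr)
      assume "S \<notin> W"
      then have nf: "\<not> satisfies S [0, 1, 2, 0] [0, 1, 0, 2]" using SU by (simp add: W_def)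
      have "\<forall>(u,v)\<in>E0. satisfies S u v" using U_Mod SU by (auto simp: U_def Mod_def)
      then have "T_sgrp \<in> V" by (rule K[OF V(1) SV _ nf])
      then have "U \<subseteq> V" unfolding U_def by (rule U_least[OF V(1)])
      then show False using V(2) by blast
    qed
  qed
  have max: "maximal_subpv W U"
    unfolding maximal_subpv_def
  proof (intro conjI allI impI)
    show "pseudovariety W" by (rule pvW)
    show "W \<subset> U" by (rule WU)
    fix V assume "pseudovariety V \<and> W \<subseteq> V \<and> V \<subset> U"
    then show "V = W" using key by blast
  qed
  have uniq: "V = W" if m: "maximal_subpv V U" for V
  proof -
    have V: "pseudovariety V" "V \<subset> U"
      and mx: "\<forall>V'. pseudovariety V' \<and> V \<subseteq> V' \<and> V' \<subset> U \<longrightarrow> V' = V"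
      using m by (auto simp: maximal_subpv_def)
    have "V \<subseteq> W" by (rule key[OF V])
    then show "V = W" using mx pvW WU by blast
  qed
  have part1: "\<forall>u v. u \<noteq> [] \<and> v \<noteq> [] \<longrightarrow>
            (satisfies T_sgrp u v \<longleftrightarrow> derivable E0 u v)"
    using T_sat_iff by blast
  show ?thesis using part1 max uniq unfolding U_def W_def by blast
qed

end
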